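(* Let $n\ge1$ and let $\alpha_1,\dots,\alpha_n$ be pairwise distinct constants. Let $y_1(x),\dots,y_n(x)$, $w_1(x),\dots,w_n(x)$ be functions, with no $y_i$ identically zero, satisfying \[ 2y_iy''_i=(y'_i)^2+4(q-\alpha_i)y^2_i-w^2_i,\qquad w'_i=2y_i,\qquad i=1,\dots,n,\qquad q=x^2-2y_1-\dots-2y_n . \] Define the polynomials in $\lambda$ \[ a(\lambda)=(\lambda-\alpha_1)\cdots(\lambda-\alpha_n),\quad y(x,\lambda)=a(\lambda)\Bigl(1-\sum_{i=1}^n\frac{y_i}{\lambda-\alpha_i}\Bigr),\quad w(x,\lambda)=a(\lambda)\Bigl(2x-\sum_{i=1}^n\frac{w_i}{\lambda-\alpha_i}\Bigr). \] Then $y$ and $w$ satisfy \[ 2yy''=(y')^2+4(q-\lambda)y^2-w^2+c,\qquad w'=2y,\qquad c=4a(\lambda)b(\lambda), \] where $b(\lambda)=(\lambda-\beta_1)\cdots(\lambda-\beta_{n+1})$ is a polynomial with constant (i.e. independent of $x$) coefficients such that $\sum_{i=1}^n\alpha_i=\sum_{i=1}^{n+1}\beta_i$.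
   Context: Primes denote derivatives with respect to $x$; $\lambda$ is an auxiliary parameter independent of $x$. The system for $y_i,w_i$ arises from the system $\psi''_i=(q-\alpha_i-1)\psi_i$, $\varphi''_i=(q-\alpha_i+1)\varphi_i$, $q=x^2-2\sum_j\psi_j\varphi_j$ via $y_i=\psi_i\varphi_i$, $w_i=\psi_i\varphi'_i-\psi'_i\varphi_i$. *)

theory Defs
  imports "HOL-Analysis.Analysis"
begin

definition apoly :: "nat \<Rightarrow> (nat \<Rightarrow> complex) \<Rightarrow> complex \<Rightarrow> complex" where
  "apoly n \<alpha> l = (\<Prod>j<n. l - \<alpha> j)"

text \<open>a(lambda) / (lambda - alpha_i), written as the polynomial prod over j different from i.\<close>
definition aquot :: "nat \<Rightarrow> (nat \<Rightarrow> complex) \<Rightarrow> nat \<Rightarrow> complex \<Rightarrow> complex" where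
  "aquot n \<alpha> i l = (\<Prod>j\<in>{..<n} - {i}. l - \<alpha> j)"

text \<open>y(x,lambda) = a(lambda) (1 - sum_i y_i/(lambda-alpha_i)), as a polynomial in lambda.\<close>
definition Ypoly :: "nat \<Rightarrow> (nat \<Rightarrow> complex) \<Rightarrow> (nat \<Rightarrow> complex \<Rightarrow> complex) \<Rightarrow> complex \<Rightarrow> complex \<Rightarrow> complex" where
  "Ypoly n \<alpha> y x l = apoly n \<alpha> l - (\<Sum>i<n. y i x * aquot n \<alpha> i l)"

text \<open>w(x,lambda) = a(lambda) (2x - sum_i w_i/(lambda-alpha_i)), as a polynomial in lambda.\<close>
definition Wpoly :: "nat \<Rightarrow> (nat \<Rightarrow> complex) \<Rightarrow> (nat \<Rightarrow> complex \<Rightarrow> complex) \<Rightarrow> complex \<Rightarrow> complex \<Rightarrow> complex" where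
  "Wpoly n \<alpha> w x l = 2 * x * apoly n \<alpha> l - (\<Sum>i<n. w i x * aquot n \<alpha> i l)"

end

theory Submission
  imports Defs "HOL-Complex_Analysis.Complex_Analysis" "HOL-Computational_Algebra.Fundamental_Theorem_Algebra"
begin

lemma linprod_props:
  fixes c :: "nat \<Rightarrow> 'a::idom"
  shows "degree (\<Prod>j<m. [:-c j, 1:]) = m \<and> coeff (\<Prod>j<m. [:-c j, 1:]) m = 1 \<and>
         coeff (\<Prod>j<Suc m. [:-c j, 1:]) m = - (\<Sum>j<Suc m. c j)"
proof (induction m)
  case 0
  then show ?case by simp
next
  case (Suc m)
  define p where "p = (\<Prod>j<m. [:-c j, 1:])"
  define r where "r = (\<Prod>j<Suc m. [:-c j, 1:])"
  have r: "r = [:-c m, 1:] * p" by (simp add: r_def p_def mult.commute)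
  have rr: "(\<Prod>j<Suc (Suc m). [:-c j, 1:]) = [:-c (Suc m), 1:] * r"
    by (simp add: r_def mult.commute)
  have dp: "degree p = m" "coeff p m = 1" and cr: "coeff r m = - (\<Sum>j<Suc m. c j)"
    using Suc by (auto simp: p_def r_def)
  have p0: "p \<noteq> 0" using dp by auto
  have dr: "degree r = Suc m" using p0 dp unfolding r by (subst degree_mult_eq) auto
  have cr1: "coeff r (Suc m) = 1" using dp by (simp add: r coeff_eq_0)
  show ?case
    unfolding rr apply (fold r_def)
    using dr cr1 cr by (auto simp: degree_mult_eq coeff_eq_0)
qed


lemma prod_dvd_roots:
  fixes p :: "'a::idom poly"
  assumes "finite S" "\<forall>a\<in>S. poly p a = 0"
  shows "(\<Prod>a\<in>S. [:-a, 1:]) dvd p"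
  using assms
proof (induction S rule: finite_induct)
  case empty
  then show ?case by simp
next
  case (insert a S)
  then obtain r where r: "p = (\<Prod>a\<in>S. [:-a, 1:]) * r" by (auto elim: dvdE)
  have "poly (\<Prod>a\<in>S. [:-a, 1:]) a \<noteq> 0" using insert(1,2) by (auto simp: poly_prod)
  moreover have "poly p a = 0" using insert by auto
  ultimately have "poly r a = 0" using r by simp
  then have "[:-a, 1:] dvd r" by (simp add: poly_eq_0_iff_dvd)
  then obtain s where s: "r = [:-a, 1:] * s" by (elim dvdE)
  have "p = (\<Prod>a\<in>insert a S. [:-a, 1:]) * s" using insert(1,2) r s by (simp add: mult_ac del: mult_pCons_left mult_pCons_right)
  then show ?case by simp
qed

lemma aquot_mul:
  assumes "i < n"
  shows "(l - \<alpha> i) * aquot n \<alpha> i l = apoly n \<alpha> l"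
  unfolding aquot_def apoly_def using assms
  by (subst prod.remove[of "{..<n}" i]) auto

lemma aquot_root:
  assumes "inj_on \<alpha> {..<n}" "i < n" "k < n" "i \<noteq> k"
  shows "aquot n \<alpha> i (\<alpha> k) = 0"
  unfolding aquot_def using assms by (intro prod_zero) auto

lemma apoly_root:
  assumes "k < n"
  shows "apoly n \<alpha> (\<alpha> k) = 0"
  unfolding apoly_def using assms by (intro prod_zero) auto

lemma sum_at_root:
  assumes "inj_on \<alpha> {..<n}" "k < n"
  shows "(\<Sum>i<n. f i * aquot n \<alpha> i (\<alpha> k)) = f k * aquot n \<alpha> k (\<alpha> k)"
proof -
  have "(\<Sum>i<n. f i * aquot n \<alpha> i (\<alpha> k)) = (\<Sum>i\<in>{k}. f i * aquot n \<alpha> i (\<alpha> k))"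
    using assms by (intro sum.mono_neutral_right) (auto simp: aquot_root)
  then show ?thesis by simp
qed

lemma deg_const_mult: "degree k = 0 \<Longrightarrow> degree p \<le> N \<Longrightarrow> degree (k * p) \<le> N"
  using degree_mult_le[of k p] by linarith


lemma poly_part:
  fixes n :: nat and \<alpha> c d e v :: "nat \<Rightarrow> complex" and qq \<xi> :: complex
  assumes n: "n \<ge> 1" and inj: "inj_on \<alpha> {..<n}"
    and qq: "qq = \<xi>^2 - 2*(\<Sum>i<n. c i)"
    and eqs: "\<And>i. i<n \<Longrightarrow> 2 * c i * e i = (d i)^2 + 4*(qq - \<alpha> i)*(c i)^2 - (v i)^2"
  shows "\<exists>\<beta>. (\<Sum>i<n. \<alpha> i) = (\<Sum>i<n+1. \<beta> i) \<and> (\<forall>l.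
     (-(\<Sum>i<n. d i * aquot n \<alpha> i l))^2 + 4*(qq - l)*(apoly n \<alpha> l - (\<Sum>i<n. c i * aquot n \<alpha> i l))^2
     - (2*\<xi>*apoly n \<alpha> l - (\<Sum>i<n. v i * aquot n \<alpha> i l))^2
     - 2*(apoly n \<alpha> l - (\<Sum>i<n. c i * aquot n \<alpha> i l))*(-(\<Sum>i<n. e i * aquot n \<alpha> i l))
     = -4 * apoly n \<alpha> l * (\<Prod>j<n+1. l - \<beta> j))"
proof -
  define FF where "FF l = (-(\<Sum>i<n. d i * aquot n \<alpha> i l))^2 + 4*(qq - l)*(apoly n \<alpha> l - (\<Sum>i<n. c i * aquot n \<alpha> i l))^2
     - (2*\<xi>*apoly n \<alpha> l - (\<Sum>i<n. v i * aquot n \<alpha> i l))^2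
     - 2*(apoly n \<alpha> l - (\<Sum>i<n. c i * aquot n \<alpha> i l))*(-(\<Sum>i<n. e i * aquot n \<alpha> i l))" for l
  define X :: "complex poly" where "X = [:0, 1:]"
  define Ap where "Ap = (\<Prod>j<n. [:-\<alpha> j, 1:])"
  define Q where "Q i = (\<Prod>j\<in>{..<n}-{i}. [:-\<alpha> j, 1:])" for i
  define S where "S = (\<Sum>i<n. [:c i:] * Q i)"
  define T where "T = (\<Sum>i<n. [:v i:] * Q i)"
  define Y1 where "Y1 = - (\<Sum>i<n. [:d i:] * Q i)"
  define Y2 where "Y2 = - (\<Sum>i<n. [:e i:] * Q i)"
  define R where "R = (\<Sum>i<n. [:c i * \<alpha> i:] * Q i)"
  define sK where "sK = [:\<Sum>i<n. c i:]"
  define qc where "qc = [:qq:]"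
  define xc where "xc = [:\<xi>:]"
  define P2 where "P2 = Y1^2 + (4*qc - 4*X)*(Ap - S)^2 - (2*xc*Ap - T)^2 - 2*(Ap - S)*Y2 + 4*X*Ap^2"
  have pAp: "poly Ap l = apoly n \<alpha> l" for l by (simp add: Ap_def apoly_def poly_prod)
  have pQ: "poly (Q i) l = aquot n \<alpha> i l" for i l by (simp add: Q_def aquot_def poly_prod)
  have pP2: "poly P2 l = FF l + 4 * l * (apoly n \<alpha> l)^2" for l
    by (simp add: P2_def FF_def Y1_def Y2_def S_def T_def qc_def xc_def X_def pAp pQ poly_sum
        algebra_simps)
  have hXS: "X * S = sK * Ap + R"
  proof -
    have "poly (X * S) l = poly (sK * Ap + R) l" for l
    proof -
      have "poly (X * S) l = (\<Sum>i<n. c i * (l * aquot n \<alpha> i l))"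
        by (simp add: X_def S_def poly_sum pQ sum_distrib_left mult_ac)
      also have "\<dots> = (\<Sum>i<n. c i * (apoly n \<alpha> l + \<alpha> i * aquot n \<alpha> i l))"
      proof (rule sum.cong)
        fix i assume "i \<in> {..<n}"
        then have "(l - \<alpha> i) * aquot n \<alpha> i l = apoly n \<alpha> l" by (simp add: aquot_mul)
        then show "c i * (l * aquot n \<alpha> i l) = c i * (apoly n \<alpha> l + \<alpha> i * aquot n \<alpha> i l)"
          by (simp add: algebra_simps)
      qed simp
      also have "\<dots> = poly (sK * Ap + R) l"
        by (simp add: sK_def R_def pAp pQ poly_sum sum_distrib_left sum_distrib_right
            sum.distrib algebra_simps)
      finally show ?thesis .
    qed
    then show ?thesis using poly_eq_poly_eq_iff by blast
  qed
  have hqc: "qc = xc^2 - 2* sK"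
  proof -
    have "poly qc l = poly (xc^2 - 2* sK) l" for l
      by (simp add: qc_def xc_def sK_def qq)
    then show ?thesis using poly_eq_poly_eq_iff by blast
  qed
  have ident: "P2 = Y1^2 + 4*qc*(S^2 - 2*Ap*S) + 8*Ap*R - 4*X*S^2 + 4*xc*Ap*T - T^2 - 2*(Ap-S)*Y2"
  proof -
    have "P2 - (Y1^2 + 4*qc*(S^2 - 2*Ap*S) + 8*Ap*R - 4*X*S^2 + 4*xc*Ap*T - T^2 - 2*(Ap-S)*Y2)
        = 8*Ap*(X*S - sK*Ap - R)"
      unfolding P2_def hqc by algebra
    also have "\<dots> = 0" by (simp add: hXS)
    finally show ?thesis by simp
  qed
  define N where "N = 2*n - 1"
  have dQ: "degree (Q i) \<le> n - 1" if "i < n" for i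
  proof -
    have "degree (Q i) \<le> (\<Sum>j\<in>{..<n}-{i}. degree [:-\<alpha> j, 1:])"
      unfolding Q_def using degree_prod_sum_le[of "{..<n}-{i}" "\<lambda>j. [:-\<alpha> j, 1:]"] by (simp add: o_def)
    also have "\<dots> = n - 1" using that by simp
    finally show ?thesis .
  qed
  have dsum: "degree (\<Sum>i<n. [:k i:] * Q i) \<le> n - 1" for k
    by (rule degree_sum_le) (auto intro!: deg_const_mult dQ simp del: One_nat_def)
  have dS: "degree S \<le> n - 1" and dT: "degree T \<le> n - 1" and dR: "degree R \<le> n - 1"
    and dY1: "degree Y1 \<le> n - 1" and dY2: "degree Y2 \<le> n - 1"
    using dsum unfolding S_def T_def R_def Y1_def Y2_def degree_minus by auto
  have lp: "degree Ap = n \<and> coeff Ap n = 1 \<and> coeff Ap (n - 1) = - (\<Sum>j<n. \<alpha> j)"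
    using linprod_props[of \<alpha> "n - 1"] linprod_props[of \<alpha> n] n by (simp add: Ap_def)
  have dAp: "degree Ap = n" using lp by simp
  have dX: "degree X = 1" by (simp add: X_def)
  have d2: "degree (p * r) \<le> N" if "degree p \<le> n - 1" "degree r \<le> n" for p r
    using degree_mult_le[of p r] that n unfolding N_def by linarith
  have d2': "degree (p * r) \<le> N" if "degree p \<le> n" "degree r \<le> n - 1" for p r
    using degree_mult_le[of p r] that n unfolding N_def by linarith
  have dconst: "degree (numeral k :: complex poly) = 0" "degree qc = 0" "degree xc = 0" for k
    by (simp_all add: qc_def xc_def)
  have t1: "degree (Y1^2) \<le> N" unfolding power2_eq_square using dY1 by (intro d2) auto
  have t2: "degree (4*qc*(S^2 - 2*Ap*S)) \<le> N"
  proof -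
    have "degree (S * S) \<le> N" using dS by (intro d2) auto
    moreover have "degree (Ap * S) \<le> N" using dS dAp by (intro d2') auto
    ultimately have "degree (S^2 - 2*(Ap*S)) \<le> N" unfolding power2_eq_square
      using deg_const_mult[of 2 "Ap*S" N] by (intro degree_diff_le) auto
    then show ?thesis unfolding mult.assoc
      by (intro deg_const_mult) (auto simp: qc_def)
  qed
  have t3: "degree (8*Ap*R) \<le> N" unfolding mult.assoc
    by (rule deg_const_mult, simp) (intro d2', use dAp dR in auto)
  have t4: "degree (4*X*S^2) \<le> N" unfolding mult.assoc
  proof (rule deg_const_mult, simp)
    have "degree (X * S^2) \<le> 1 + ((n-1) + (n-1))"
      using degree_mult_le[of X "S^2"] degree_mult_le[of S S] dS dX unfolding power2_eq_square by linarith
    then show "degree (X * S^2) \<le> N" unfolding N_def using n by linarith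
  qed
  have t5: "degree (4*xc*Ap*T) \<le> N" unfolding mult.assoc
    by (rule deg_const_mult, simp, rule deg_const_mult, simp add: xc_def) (intro d2', use dAp dT in auto)
  have t6: "degree (T^2) \<le> N" unfolding power2_eq_square using dT by (intro d2) auto
  have t7: "degree (2*(Ap-S)*Y2) \<le> N" unfolding mult.assoc
  proof (rule deg_const_mult, simp)
    have "degree (Ap - S) \<le> n" using dAp dS by (intro degree_diff_le) auto
    then show "degree ((Ap - S) * Y2) \<le> N" using dY2 by (intro d2') auto
  qed
  have dP2: "degree P2 \<le> N" unfolding ident
    by (intro degree_add_le degree_diff_le t1 t2 t3 t4 t5 t6 t7)
  have roots: "poly P2 (\<alpha> k) = 0" if "k < n" for k
  proof -
    have "FF (\<alpha> k) = (aquot n \<alpha> k (\<alpha> k))^2 *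
       ((d k)^2 + 4*(qq - \<alpha> k)*(c k)^2 - (v k)^2 - 2 * c k * e k)"
      unfolding FF_def using that inj
      by (simp add: sum_at_root apoly_root algebra_simps power2_eq_square)
    then show ?thesis using eqs[OF that] by (simp add: pP2 apoly_root that)
  qed
  have "Ap = (\<Prod>a\<in>\<alpha> ` {..<n}. [:-a, 1:])"
    unfolding Ap_def using inj by (simp add: prod.reindex)
  moreover have "(\<Prod>a\<in>\<alpha> ` {..<n}. [:-a, 1:]) dvd P2"
    using roots by (intro prod_dvd_roots) auto
  ultimately obtain D where D: "P2 = Ap * D" by (auto elim: dvdE)
  have cD: "coeff D k = 0" if "k \<ge> n" for k
  proof (cases "D = 0")
    case False
    have "Ap \<noteq> 0" using dAp n by auto
    then have "degree P2 = n + degree D" using False D dAp by (simp add: degree_mult_eq)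
    then have "degree D < n" using dP2 n unfolding N_def by linarith
    then show ?thesis using that by (intro coeff_eq_0) auto
  qed simp
  define b where "b = X * Ap - smult (1/4) D"
  have pb: "FF l = -4 * apoly n \<alpha> l * poly b l" for l
  proof -
    have "poly P2 l = apoly n \<alpha> l * poly D l" using D pAp by simp
    then show ?thesis using pP2[of l] by (simp add: b_def X_def pAp algebra_simps power2_eq_square)
  qed
  have cb1: "coeff b (n+1) = 1" using lp cD by (simp add: b_def X_def)
  have cb2: "coeff b n = - (\<Sum>j<n. \<alpha> j)" using lp cD n by (cases n) (simp_all add: b_def X_def del: sum.lessThan_Suc)
  have cb3: "coeff b k = 0" if "k > n + 1" for k
    using lp cD that by (auto simp: b_def X_def coeff_pCons coeff_eq_0 split: nat.split)
  have db: "degree b = n + 1"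
  proof (rule antisym)
    show "degree b \<le> n + 1" using cb3 by (intro degree_le) auto
    show "n + 1 \<le> degree b" using cb1 by (intro le_degree) auto
  qed
  obtain root where rt: "smult (lead_coeff b) (\<Prod>i<degree b. [:-root i, 1:]) = b"
    using complex_poly_decompose' by blast
  have bprod: "b = (\<Prod>i<n+1. [:-root i, 1:])" using rt db cb1 by simp
  have "coeff (\<Prod>i<n+1. [:-root i, 1:]) n = - (\<Sum>i<n+1. root i)"
    using linprod_props[of root n] unfolding Suc_eq_plus1 by blast
  then have "coeff b n = - (\<Sum>i<n+1. root i)" using bprod by simp
  then have sums: "(\<Sum>i<n. \<alpha> i) = (\<Sum>i<n+1. root i)" using cb2 by (simp add: algebra_simps)
  have "poly b l = (\<Prod>j<n+1. l - root j)" for l unfolding bprod by (simp add: poly_prod algebra_simps)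
  then show ?thesis using sums pb unfolding FF_def by (intro exI[of _ root]) auto
qed


lemma third:
  fixes f f1 f2 wf Qf Q1 :: "complex \<Rightarrow> complex" and U :: "complex set" and a :: complex
  assumes U: "open U" "connected U"
   and d1: "\<And>x. x\<in>U \<Longrightarrow> (f has_field_derivative f1 x) (at x)"
   and d2: "\<And>x. x\<in>U \<Longrightarrow> (f1 has_field_derivative f2 x) (at x)"
   and dw: "\<And>x. x\<in>U \<Longrightarrow> (wf has_field_derivative 2 * f x) (at x)"
   and dq: "\<And>x. x\<in>U \<Longrightarrow> (Qf has_field_derivative Q1 x) (at x)"
   and cq1: "continuous_on U Q1"
   and eq: "\<And>x. x\<in>U \<Longrightarrow> 2*f x*f2 x = (f1 x)^2 + 4*(Qf x - a)*(f x)^2 - (wf x)^2"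
   and nz: "\<exists>x\<in>U. f x \<noteq> 0"
  shows "\<exists>f3. \<forall>x\<in>U. (f2 has_field_derivative f3 x) (at x) \<and>
            f3 x = 2*Q1 x*f x + 4*(Qf x - a)*f1 x - 2*wf x"
proof -
  have hf: "f holomorphic_on U" unfolding holomorphic_on_def field_differentiable_def
    using d1 has_field_derivative_at_within by blast
  have hf1: "f1 holomorphic_on U" unfolding holomorphic_on_def field_differentiable_def
    using d2 has_field_derivative_at_within by blast
  have hw: "wf holomorphic_on U" unfolding holomorphic_on_def field_differentiable_def
    using dw has_field_derivative_at_within by blast
  have hQ: "Qf holomorphic_on U" unfolding holomorphic_on_def field_differentiable_def
    using dq has_field_derivative_at_within by blast
  have f2d: "f2 x = deriv f1 x" if "x \<in> U" for x using d2[OF that] by (simp add: DERIV_imp_deriv)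
  define f3 where "f3 = deriv (deriv f1)"
  have hdf1: "deriv f1 holomorphic_on U" by (rule holomorphic_deriv[OF hf1 U(1)])
  have hf3: "f3 holomorphic_on U" unfolding f3_def by (rule holomorphic_deriv[OF hdf1 U(1)])
  have d3: "(f2 has_field_derivative f3 x) (at x)" if "x \<in> U" for x
  proof -
    have "(deriv f1 has_field_derivative f3 x) (at x)"
      unfolding f3_def by (rule holomorphic_derivI[OF hdf1 U(1) that])
    then show ?thesis
      by (rule has_field_derivative_transform_within_open[OF _ U(1) that]) (simp add: f2d)
  qed
  define G where "G x = 2*Q1 x*f x + 4*(Qf x - a)*f1 x - 2*wf x" for x
  have prod0: "f x * (f3 x - G x) = 0" if "x \<in> U" for x
  proof -
    have A: "((\<lambda>x. 2*f x*f2 x) has_field_derivative (2*f1 x*f2 x + 2*f x*f3 x)) (at x)"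
      using d1[OF that] d3[OF that] by (auto intro!: derivative_eq_intros)
    have B: "((\<lambda>x. (f1 x)^2 + 4*(Qf x - a)*(f x)^2 - (wf x)^2) has_field_derivative
        (2*f1 x*f2 x + 4*Q1 x*(f x)^2 + 4*(Qf x - a)*(2*f x*f1 x) - 2*wf x*(2*f x))) (at x)"
      using d1[OF that] d2[OF that] dw[OF that] dq[OF that]
      by (auto intro!: derivative_eq_intros simp: power2_eq_square algebra_simps)
    have B': "((\<lambda>x. 2*f x*f2 x) has_field_derivative
        (2*f1 x*f2 x + 4*Q1 x*(f x)^2 + 4*(Qf x - a)*(2*f x*f1 x) - 2*wf x*(2*f x))) (at x)"
      by (rule has_field_derivative_transform_within_open[OF B U(1) that]) (simp add: eq)
    have "2*f1 x*f2 x + 2*f x*f3 x =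
        2*f1 x*f2 x + 4*Q1 x*(f x)^2 + 4*(Qf x - a)*(2*f x*f1 x) - 2*wf x*(2*f x)"
      using DERIV_unique[OF A B'] .
    then have "2 * (f x * (f3 x - G x)) = 0" unfolding G_def by (simp add: algebra_simps power2_eq_square)
    then show ?thesis by simp
  qed
  have key: "f3 x = G x" if xU: "x \<in> U" for x
  proof (rule ccontr)
    assume ne: "f3 x \<noteq> G x"
    note c = holomorphic_on_imp_continuous_on[OF hf3] holomorphic_on_imp_continuous_on[OF hf]
        holomorphic_on_imp_continuous_on[OF hf1] holomorphic_on_imp_continuous_on[OF hw]
        holomorphic_on_imp_continuous_on[OF hQ] cq1
    have cG: "continuous_on U (\<lambda>x. f3 x - G x)" unfolding G_def
      by (intro continuous_intros c)
    have cx: "continuous (at x) (\<lambda>x. f3 x - G x)"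
      using cG U(1) xU by (simp add: continuous_on_eq_continuous_at)
    have ne': "(\<lambda>x. f3 x - G x) x \<noteq> 0" using ne by simp
    from continuous_at_avoid[OF cx ne'] obtain e1 where e1: "e1 > 0" "\<And>z. dist x z < e1 \<Longrightarrow> f3 z - G z \<noteq> 0"
      by blast
    obtain e2 where e2: "e2 > 0" "ball x e2 \<subseteq> U" using U(1) xU by (meson open_contains_ball)
    define e where "e = min e1 e2"
    have "ball x e \<subseteq> ball x e2" unfolding e_def by (intro subset_ball) simp
    then have e: "e > 0" "ball x e \<subseteq> U" using e1(1) e2 by (auto simp: e_def)
    have z0: "f z = 0" if "z \<in> ball x e" for z
    proof -
      have zU: "z \<in> U" using e(2) that by blast
      have "dist x z < e1" using that by (simp add: e_def)
      then have "f3 z - G z \<noteq> 0" by (rule e1(2))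
      then show ?thesis using prod0[OF zU] by simp
    qed
    have bne: "ball x e \<noteq> {}" using e by simp
    have "f z = 0" if "z \<in> U" for z
      using analytic_continuation_open[OF open_ball U(1) bne U(2) e(2) hf holomorphic_on_const z0 that] .
    then show False using nz by auto
  qed
  show ?thesis using d3 key unfolding G_def by blast
qed

theorem theorem1:
  fixes n :: nat and \<alpha> :: "nat \<Rightarrow> complex" and U :: "complex set"
    and y y' y'' w :: "nat \<Rightarrow> complex \<Rightarrow> complex"
    and q :: "complex \<Rightarrow> complex"
  assumes n: "n \<ge> 1"
    and distinct: "inj_on \<alpha> {..<n}"
    and U: "open U" "connected U" "U \<noteq> {}"
    and q_def: "\<And>x. q x = x\<^sup>2 - 2 * (\<Sum>i<n. y i x)"
    and dy: "\<And>i x. i < n \<Longrightarrow> x \<in> U \<Longrightarrow> (y i has_field_derivative y' i x) (at x)"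
    and ddy: "\<And>i x. i < n \<Longrightarrow> x \<in> U \<Longrightarrow> (y' i has_field_derivative y'' i x) (at x)"
    and dw: "\<And>i x. i < n \<Longrightarrow> x \<in> U \<Longrightarrow> (w i has_field_derivative 2 * y i x) (at x)"
    and eq: "\<And>i x. i < n \<Longrightarrow> x \<in> U \<Longrightarrow>
       2 * y i x * y'' i x = (y' i x)\<^sup>2 + 4 * (q x - \<alpha> i) * (y i x)\<^sup>2 - (w i x)\<^sup>2"
    and nonzero: "\<And>i. i < n \<Longrightarrow> \<exists>x\<in>U. y i x \<noteq> 0"
  shows "\<exists>\<beta> :: nat \<Rightarrow> complex.
     (\<Sum>i<n. \<alpha> i) = (\<Sum>i<n+1. \<beta> i) \<and>
     (\<forall>l. \<exists>Y' Y'' :: complex \<Rightarrow> complex. \<forall>x\<in>U.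
        ((\<lambda>x. Ypoly n \<alpha> y x l) has_field_derivative Y' x) (at x) \<and>
        (Y' has_field_derivative Y'' x) (at x) \<and>
        ((\<lambda>x. Wpoly n \<alpha> w x l) has_field_derivative 2 * Ypoly n \<alpha> y x l) (at x) \<and>
        2 * Ypoly n \<alpha> y x l * Y'' x
          = (Y' x)\<^sup>2 + 4 * (q x - l) * (Ypoly n \<alpha> y x l)\<^sup>2 - (Wpoly n \<alpha> w x l)\<^sup>2
            + 4 * apoly n \<alpha> l * (\<Prod>j<n+1. l - \<beta> j))"
proof -
  from U obtain x0 where x0: "x0 \<in> U" by auto
  have qfun: "q = (\<lambda>x. x^2 - 2*(\<Sum>i<n. y i x))" using q_def by auto
  define q1 where "q1 x = 2*x - 2*(\<Sum>i<n. y' i x)" for x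
  have dq: "(q has_field_derivative q1 x) (at x)" if "x \<in> U" for x
    unfolding qfun q1_def using dy that by (auto intro!: derivative_eq_intros simp: sum_distrib_left mult.commute)
  have cy': "continuous_on U (y' j)" if "j < n" for j
    using ddy that by (meson DERIV_isCont continuous_at_imp_continuous_on)
  have "continuous_on U (\<lambda>x. \<Sum>j<n. y' j x)" using cy' by (intro continuous_on_sum) auto
  then have cq1: "continuous_on U q1" unfolding q1_def
    by (intro continuous_on_diff continuous_on_mult continuous_on_const continuous_on_id) auto
  have ex3: "\<forall>i\<in>{..<n}. \<exists>f3. \<forall>x\<in>U. (y'' i has_field_derivative f3 x) (at x) \<and>
            f3 x = 2*q1 x*y i x + 4*(q x - \<alpha> i)*y' i x - 2*w i x"
  proof
    fix i assume i: "i \<in> {..<n}"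
    show "\<exists>f3. \<forall>x\<in>U. (y'' i has_field_derivative f3 x) (at x) \<and>
            f3 x = 2*q1 x*y i x + 4*(q x - \<alpha> i)*y' i x - 2*w i x"
      using i by (intro third[OF U(1) U(2) dy ddy dw dq cq1 eq nonzero]) auto
  qed
  obtain y3 where y3: "\<forall>i\<in>{..<n}. \<forall>x\<in>U. (y'' i has_field_derivative y3 i x) (at x) \<and>
            y3 i x = 2*q1 x*y i x + 4*(q x - \<alpha> i)*y' i x - 2*w i x"
    using bchoice[OF ex3] by blast
  have eqs0: "\<And>i. i<n \<Longrightarrow> 2 * y i x0 * y'' i x0 = (y' i x0)^2 + 4*(q x0 - \<alpha> i)*(y i x0)^2 - (w i x0)^2"
    using eq x0 by blast
  obtain \<beta> where s\<beta>: "(\<Sum>i<n. \<alpha> i) = (\<Sum>i<n+1. \<beta> i)" and F\<beta>: "\<forall>l.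
     (-(\<Sum>i<n. y' i x0 * aquot n \<alpha> i l))^2 + 4*(q x0 - l)*(apoly n \<alpha> l - (\<Sum>i<n. y i x0 * aquot n \<alpha> i l))^2
     - (2*x0*apoly n \<alpha> l - (\<Sum>i<n. w i x0 * aquot n \<alpha> i l))^2
     - 2*(apoly n \<alpha> l - (\<Sum>i<n. y i x0 * aquot n \<alpha> i l))*(-(\<Sum>i<n. y'' i x0 * aquot n \<alpha> i l))
     = -4 * apoly n \<alpha> l * (\<Prod>j<n+1. l - \<beta> j)"
    using poly_part[of n \<alpha> "q x0" x0 "\<lambda>i. y i x0" "\<lambda>i. y'' i x0" "\<lambda>i. y' i x0" "\<lambda>i. w i x0",
      OF n distinct q_def eqs0] by blast
  show ?thesis
  proof (intro exI[of _ \<beta>] conjI allI)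
    show "(\<Sum>i<n. \<alpha> i) = (\<Sum>i<n+1. \<beta> i)" by (rule s\<beta>)
    fix l
    define Yf where "Yf x = apoly n \<alpha> l - (\<Sum>i<n. y i x * aquot n \<alpha> i l)" for x
    define Y1f where "Y1f x = -(\<Sum>i<n. y' i x * aquot n \<alpha> i l)" for x
    define Y2f where "Y2f x = -(\<Sum>i<n. y'' i x * aquot n \<alpha> i l)" for x
    define Y3f where "Y3f x = -(\<Sum>i<n. y3 i x * aquot n \<alpha> i l)" for x
    define Wf where "Wf x = 2*x*apoly n \<alpha> l - (\<Sum>i<n. w i x * aquot n \<alpha> i l)" for x
    define Ff where "Ff x = (Y1f x)^2 + 4*(q x - l)*(Yf x)^2 - (Wf x)^2 - 2*Yf x*Y2f x" for x
    have YY: "(\<lambda>x. Ypoly n \<alpha> y x l) = Yf" by (simp add: Ypoly_def Yf_def fun_eq_iff)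
    have WW: "(\<lambda>x. Wpoly n \<alpha> w x l) = Wf" by (simp add: Wpoly_def Wf_def fun_eq_iff)
    have dY: "(Yf has_field_derivative Y1f x) (at x)" if "x \<in> U" for x
      unfolding Yf_def Y1f_def using dy that by (auto intro!: derivative_eq_intros)
    have dY1: "(Y1f has_field_derivative Y2f x) (at x)" if "x \<in> U" for x
      unfolding Y1f_def Y2f_def using ddy that by (auto intro!: derivative_eq_intros)
    have dY2: "(Y2f has_field_derivative Y3f x) (at x)" if "x \<in> U" for x
      unfolding Y2f_def Y3f_def using y3 that by (auto intro!: derivative_eq_intros)
    have dW: "(Wf has_field_derivative 2 * Yf x) (at x)" if "x \<in> U" for x
      unfolding Wf_def Yf_def using dw that
      by (auto intro!: derivative_eq_intros simp: sum_distrib_left algebra_simps)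
    have Y3id: "Y3f x = 2*q1 x*Yf x + 4*(q x - l)*Y1f x - 2*Wf x" if "x \<in> U" for x
    proof -
      have "(\<Sum>i<n. y3 i x * aquot n \<alpha> i l) = (\<Sum>i<n. 2*q1 x*(y i x * aquot n \<alpha> i l)
           + 4*(q x - l)*(y' i x * aquot n \<alpha> i l) + 4*apoly n \<alpha> l * y' i x - 2*(w i x * aquot n \<alpha> i l))"
      proof (rule sum.cong)
        fix i assume "i \<in> {..<n}"
        then have e3: "y3 i x = 2*q1 x*y i x + 4*(q x - \<alpha> i)*y' i x - 2*w i x"
          and am: "(l - \<alpha> i) * aquot n \<alpha> i l = apoly n \<alpha> l"
          using y3 that aquot_mul by auto
        then show "y3 i x * aquot n \<alpha> i l = 2*q1 x*(y i x * aquot n \<alpha> i l)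
           + 4*(q x - l)*(y' i x * aquot n \<alpha> i l) + 4*apoly n \<alpha> l * y' i x - 2*(w i x * aquot n \<alpha> i l)"
          unfolding e3 am[symmetric] by (simp add: algebra_simps)
      qed simp
      then show ?thesis
        unfolding Y3f_def Yf_def Y1f_def Wf_def q1_def
        by (simp add: sum.distrib sum_subtractf sum_distrib_left algebra_simps)
    qed
    have dF: "(Ff has_field_derivative 0) (at x)" if "x \<in> U" for x
    proof -
      have "(Ff has_field_derivative (2*Y1f x*Y2f x + 4*(q1 x*(Yf x)^2 + (q x - l)*(2*Yf x*Y1f x))
             - 2*Wf x*(2*Yf x) - 2*(Y1f x*Y2f x + Yf x*Y3f x))) (at x)"
        unfolding Ff_def using dY[OF that] dY1[OF that] dY2[OF that] dW[OF that] dq[OF that]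
        by (auto intro!: derivative_eq_intros simp: power2_eq_square algebra_simps)
      moreover have "2*Y1f x*Y2f x + 4*(q1 x*(Yf x)^2 + (q x - l)*(2*Yf x*Y1f x))
             - 2*Wf x*(2*Yf x) - 2*(Y1f x*Y2f x + Yf x*Y3f x) = 0"
        unfolding Y3id[OF that] by (simp add: power2_eq_square algebra_simps)
      ultimately show ?thesis by simp
    qed
    have "Ff constant_on U" using dF U by (intro has_field_derivative_0_imp_constant_on) auto
    then have Fc: "Ff x = Ff x0" if "x \<in> U" for x
      using that x0 unfolding constant_on_def by metis
    have F0: "Ff x0 = -4 * apoly n \<alpha> l * (\<Prod>j<n+1. l - \<beta> j)"
      using F\<beta> unfolding Ff_def Yf_def Y1f_def Y2f_def Wf_def by simp
    show "\<exists>Y' Y''. \<forall>x\<in>U.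
        ((\<lambda>x. Ypoly n \<alpha> y x l) has_field_derivative Y' x) (at x) \<and>
        (Y' has_field_derivative Y'' x) (at x) \<and>
        ((\<lambda>x. Wpoly n \<alpha> w x l) has_field_derivative 2 * Ypoly n \<alpha> y x l) (at x) \<and>
        2 * Ypoly n \<alpha> y x l * Y'' x
          = (Y' x)\<^sup>2 + 4 * (q x - l) * (Ypoly n \<alpha> y x l)\<^sup>2 - (Wpoly n \<alpha> w x l)\<^sup>2
            + 4 * apoly n \<alpha> l * (\<Prod>j<n+1. l - \<beta> j)"
    proof (rule exI[of _ Y1f], rule exI[of _ Y2f], intro ballI)
      fix x assume x: "x \<in> U"
      have Yx: "Ypoly n \<alpha> y x l = Yf x" "Wpoly n \<alpha> w x l = Wf x" using YY WW by metis+
      have h1: "((\<lambda>x. Ypoly n \<alpha> y x l) has_field_derivative Y1f x) (at x)" unfolding YY by (rule dY[OF x])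
      have h2: "(Y1f has_field_derivative Y2f x) (at x)" by (rule dY1[OF x])
      have h3: "((\<lambda>x. Wpoly n \<alpha> w x l) has_field_derivative 2 * Ypoly n \<alpha> y x l) (at x)"
        unfolding WW Yx by (rule dW[OF x])
      have h4: "2 * Ypoly n \<alpha> y x l * Y2f x
          = (Y1f x)\<^sup>2 + 4 * (q x - l) * (Ypoly n \<alpha> y x l)\<^sup>2 - (Wpoly n \<alpha> w x l)\<^sup>2
            + 4 * apoly n \<alpha> l * (\<Prod>j<n+1. l - \<beta> j)"
      proof -
        have E: "Ff x = -4 * apoly n \<alpha> l * (\<Prod>j<n+1. l - \<beta> j)" using Fc[OF x] F0 by simp
        have "2 * Yf x * Y2f x - ((Y1f x)\<^sup>2 + 4 * (q x - l) * (Yf x)\<^sup>2 - (Wf x)\<^sup>2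
            + 4 * apoly n \<alpha> l * (\<Prod>j<n+1. l - \<beta> j))
          = -(Ff x - (-4 * apoly n \<alpha> l * (\<Prod>j<n+1. l - \<beta> j)))"
          unfolding Ff_def by (simp add: algebra_simps)
        also have "\<dots> = 0" using E by simp
        finally show ?thesis unfolding Yx by simp
      qed
      show "((\<lambda>x. Ypoly n \<alpha> y x l) has_field_derivative Y1f x) (at x) \<and>
        (Y1f has_field_derivative Y2f x) (at x) \<and>
        ((\<lambda>x. Wpoly n \<alpha> w x l) has_field_derivative 2 * Ypoly n \<alpha> y x l) (at x) \<and>
        2 * Ypoly n \<alpha> y x l * Y2f x
          = (Y1f x)\<^sup>2 + 4 * (q x - l) * (Ypoly n \<alpha> y x l)\<^sup>2 - (Wpoly n \<alpha> w x l)\<^sup>2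
            + 4 * apoly n \<alpha> l * (\<Prod>j<n+1. l - \<beta> j)"
        using h1 h2 h3 h4 by blast
    qed
  qed
qed

end
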